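(* The saturation of a finite sample set is finite.
   Context: Basic terms are built from a countably infinite set of variables using binary $\cdot$, unary ${}'$ and constant $1$. Fix a countably infinite set of time variables. Samples are the formal expressions generated by the grammar $\alpha::=\kappa\mid t[\alpha]\mid\mathrm{suc}(\alpha)\mid\mathrm{last}(t)$, where $\kappa$ is a time variable and $t$ a basic term. Let $\leadsto$ be the binary relation on samples given by: $t[\alpha]\leadsto\alpha$; $\mathrm{suc}(\alpha)\leadsto\alpha$; $t[\alpha]\leadsto t[\mathrm{last}(t)]$; $(tu)[\alpha]\leadsto t[u[\alpha]]$; $t'[\alpha]\leadsto t[t'[\alpha]]$; $t'[\alpha]\leadsto t[\mathrm{suc}(t'[\alpha])]$. The saturation of a set $\Delta$ of samples is $\{\beta\mid\alpha\leadsto^*\beta\text{ for some }\alpha\in\Delta\}$, where $\leadsto^*$ is the reflexive transitive closure of $\leadsto$. *)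

theory Defs
  imports Main
begin

text \<open>Basic terms over a countably infinite set of variables (modelled by nat).\<close>
datatype bterm = Var nat | Mul bterm bterm | Prime bterm | One

text \<open>Samples; time variables modelled by nat.\<close>
datatype sample = TVar nat | App bterm sample | Suc_s sample | Last bterm

inductive step :: "sample \<Rightarrow> sample \<Rightarrow> bool" where
  app_arg: "step (App t a) a"
| suc_arg: "step (Suc_s a) a"
| app_last: "step (App t a) (App t (Last t))"
| app_mul: "step (App (Mul t u) a) (App t (App u a))"
| app_prime: "step (App (Prime t) a) (App t (App (Prime t) a))"
| app_prime_suc: "step (App (Prime t) a) (App t (Suc_s (App (Prime t) a)))"

definition saturation :: "sample set \<Rightarrow> sample set" where
  "saturation \<Delta> = {b. \<exists>a\<in>\<Delta>. step\<^sup>*\<^sup>* a b}"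

end

theory Submission
  imports Defs
begin

fun G :: "bterm \<Rightarrow> sample set \<Rightarrow> sample set" where
  "G (Mul t u) X = App (Mul t u) ` (insert (Last (Mul t u)) X) \<union> insert (Last (Mul t u)) X
      \<union> G t (G u (insert (Last (Mul t u)) X))"
| "G (Prime t) X = (App (Prime t) ` (insert (Last (Prime t)) X)
      \<union> Suc_s ` App (Prime t) ` (insert (Last (Prime t)) X) \<union> insert (Last (Prime t)) X)
      \<union> G t (App (Prime t) ` (insert (Last (Prime t)) X)
      \<union> Suc_s ` App (Prime t) ` (insert (Last (Prime t)) X) \<union> insert (Last (Prime t)) X)"
| "G t X = App t ` (insert (Last t) X) \<union> insert (Last t) X"

lemma G_sup: "X \<subseteq> G t X \<and> App t ` X \<subseteq> G t X"
  by (induction t arbitrary: X) auto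

lemma G_fin: "finite X \<Longrightarrow> finite (G t X)"
  by (induction t arbitrary: X) auto

lemma last_nostep: "\<not> step (Last s) z"
  by (auto elim: step.cases)

lemma step_AppE:
  assumes "step (App t x) z"
  obtains "z = x" | "z = App t (Last t)"
  | t1 u1 where "t = Mul t1 u1" "z = App t1 (App u1 x)"
  | t1 where "t = Prime t1" "z = App t1 (App (Prime t1) x)"
  | t1 where "t = Prime t1" "z = App t1 (Suc_s (App (Prime t1) x))"
  using assms by (cases rule: step.cases) auto

lemma G_closed: "y \<in> G t X \<Longrightarrow> y \<notin> X \<Longrightarrow> step y z \<Longrightarrow> z \<in> G t X"
proof (induction t arbitrary: X y z)
  case (Mul t u)
  let ?X = "insert (Last (Mul t u)) X"
  let ?H = "G u ?X"
  have s1: "?X \<subseteq> ?H" "App u ` ?X \<subseteq> ?H" using G_sup by blast+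
  have s2: "?H \<subseteq> G t ?H" "App t ` ?H \<subseteq> G t ?H" using G_sup by blast+
  have s3: "App t ` App u ` ?X \<subseteq> G t ?H" using s1 s2 by blast
  show ?case
  proof (cases "y \<in> App (Mul t u) ` ?X")
    case True
    then obtain x where x: "x \<in> ?X" "y = App (Mul t u) x" by blast
    from Mul.prems(3)[unfolded x(2)] show ?thesis
    proof (cases rule: step_AppE)
      case 1 then show ?thesis using x by auto
    next
      case 2 then show ?thesis by simp
    next
      case 3 then show ?thesis using x s3 by auto
    qed auto
  next
    case False
    show ?thesis
    proof (cases "y \<in> ?X")
      case True
      then have "y = Last (Mul t u)" using Mul.prems by auto
      then show ?thesis using Mul.prems last_nostep by blast
    next
      case F2: False
      have yin: "y \<in> G t ?H" using Mul.prems False F2 by auto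
      show ?thesis
      proof (cases "y \<in> ?H")
        case True
        then have "z \<in> ?H" using Mul.IH(2)[OF True F2 Mul.prems(3)] by blast
        then show ?thesis using s2 by auto
      next
        case False
        then show ?thesis using Mul.IH(1)[OF yin False Mul.prems(3)] by auto
      qed
    qed
  qed
next
  case (Prime t)
  let ?X = "insert (Last (Prime t)) X"
  let ?P = "App (Prime t) ` ?X \<union> Suc_s ` App (Prime t) ` ?X \<union> ?X"
  have GP: "G (Prime t) X = ?P \<union> G t ?P" by (rule G.simps(2))
  have s2': "?P \<subseteq> G t ?P \<and> App t ` ?P \<subseteq> G t ?P" by (rule G_sup)
  note s2 = s2'[THEN conjunct1] s2'[THEN conjunct2]
  have s5: "G (Prime t) X = G t ?P" using GP s2(1) by (simp only: sup_absorb2)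
  show ?case
  proof (cases "y \<in> ?P")
    case True
    then consider (a) x where "x \<in> ?X" "y = App (Prime t) x"
      | (b) x where "x \<in> ?X" "y = Suc_s (App (Prime t) x)" | (c) "y \<in> ?X" by blast
    then show ?thesis
    proof cases
      case a
      have s4: "App t (App (Prime t) x) \<in> G t ?P" "App t (Suc_s (App (Prime t) x)) \<in> G t ?P"
        "x \<in> G t ?P" "App (Prime t) (Last (Prime t)) \<in> G t ?P"
      proof -
        have p1: "App (Prime t) x \<in> ?P" using a(1) by (intro UnI1 imageI)
        have p2: "Suc_s (App (Prime t) x) \<in> ?P" using a(1) by (intro UnI1 UnI2 imageI)
        have p3: "x \<in> ?P" using a(1) by (rule UnI2)
        have p4: "App (Prime t) (Last (Prime t)) \<in> ?P" by (intro UnI1 imageI insertI1)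
        show "App t (App (Prime t) x) \<in> G t ?P" by (rule subsetD[OF s2(2) imageI[OF p1]])
        show "App t (Suc_s (App (Prime t) x)) \<in> G t ?P" by (rule subsetD[OF s2(2) imageI[OF p2]])
        show "x \<in> G t ?P" by (rule subsetD[OF s2(1) p3])
        show "App (Prime t) (Last (Prime t)) \<in> G t ?P" by (rule subsetD[OF s2(1) p4])
      qed
      from Prime.prems(3)[unfolded a(2)] have "z \<in> G t ?P"
      proof (cases rule: step_AppE)
        case 1 then show ?thesis using s4 by simp
      next
        case 2 then show ?thesis using s4 by simp
      next
        case (3 t1 u1) then show ?thesis by simp
      next
        case (4 t1) then show ?thesis using s4 by simp
      next
        case (5 t1) then show ?thesis using s4 by simp
      qed
      then show ?thesis using s5 by simp
    next
      case b
      have "z = App (Prime t) x" using Prime.prems(3)[unfolded b(2)]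
        by (cases rule: step.cases) auto
      then have "z \<in> ?P" using b by blast
      then show ?thesis using GP by blast
    next
      case c
      then have "y = Last (Prime t)" using Prime.prems by blast
      then show ?thesis using Prime.prems last_nostep by blast
    qed
  next
    case False
    then have "y \<in> G t ?P" using Prime.prems GP by blast
    then show ?thesis using Prime.IH[OF _ False Prime.prems(3)] s5 by simp
  qed
next
  case (Var n)
  then consider "y = Last (Var n)" | x where "y = App (Var n) x" by auto
  then show ?case
  proof cases
    case 1 then show ?thesis using Var last_nostep by blast
  next
    case 2
    from Var.prems(3)[unfolded 2] show ?thesis
      by (cases rule: step_AppE) (use Var.prems 2 in auto)
  qed
next
  case One
  then consider "y = Last One" | x where "y = App One x" by auto
  then show ?case
  proof cases
    case 1 then show ?thesis using One last_nostep by blast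
  next
    case 2
    from One.prems(3)[unfolded 2] show ?thesis
      by (cases rule: step_AppE) (use One.prems 2 in auto)
  qed
qed

fun C :: "sample \<Rightarrow> sample set" where
  "C (TVar n) = {TVar n}"
| "C (Last t) = {Last t}"
| "C (Suc_s a) = insert (Suc_s a) (C a)"
| "C (App t a) = G t (C a)"

lemma C_props: "a \<in> C a \<and> finite (C a) \<and> (\<forall>y z. y \<in> C a \<longrightarrow> step y z \<longrightarrow> z \<in> C a)"
proof (induction a)
  case (TVar n)
  have "\<And>z. \<not> step (TVar n) z" by (auto elim: step.cases)
  then show ?case by auto
next
  case (App t a)
  have "\<forall>y z. y \<in> G t (C a) \<longrightarrow> step y z \<longrightarrow> z \<in> G t (C a)"
    using App G_sup[of "C a" t] G_closed[of _ t "C a"] by blast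
  then show ?case using App G_sup[of "C a" t] G_fin[of "C a" t] by auto
next
  case (Suc_s a)
  have "\<And>z. step (Suc_s a) z \<Longrightarrow> z = a" by (auto elim: step.cases)
  then show ?case using Suc_s by auto
next
  case (Last t)
  then show ?case using last_nostep by auto
qed

lemma C_reach: "step\<^sup>*\<^sup>* a b \<Longrightarrow> b \<in> C a"
  by (induction rule: rtranclp_induct) (use C_props in blast)+

theorem lemma3p2:
  fixes \<Delta> :: "sample set"
  assumes "finite \<Delta>"
  shows "finite (saturation \<Delta>)"
proof -
  have "saturation \<Delta> \<subseteq> (\<Union>a\<in>\<Delta>. C a)"
    unfolding saturation_def using C_reach by blast
  moreover have "finite (\<Union>a\<in>\<Delta>. C a)" using assms C_props by blast
  ultimately show ?thesis using finite_subset by blast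
qed

end
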